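(* The relation $\mathrm{Step}^{(d)}\cup\mathrm{Step}^{(p)}$ is well-founded: there is no infinite sequence of configurations $\gamma_0,\gamma_1,\dots$ such that each $\gamma_i\to\gamma_{i+1}$ is a d-step or a par-step.
   Context: Let $G$ be a finite, connected, undirected graph with node set $V$ and a distinguished node $r$ (the root). Each node $p$ has a fixed ordered list $N(p)$ of its neighbours. A configuration $\gamma$ assigns to each node $p$ a value $\gamma.p.d\in\mathbb N$ (unbounded) and a neighbour $\gamma.p.par\in N(p)$. For a non-root node $p$ let $Dist_p(\gamma)=\min\{\gamma.q.d+1 : q\in N(p)\}$. Algorithm BFS (Dolev et al.) has the following actions. Root: enabled iff $\gamma.r.d\neq 0$; executing it sets $r.d:=0$. Non-root $p$, action CD: enabled iff $\gamma.p.d\ne Dist_p(\gamma)$; executing sets $p.d:=Dist_p(\gamma)$. Non-root $p$, action CP: enabled iff $\gamma.p.d=Dist_p(\gamma)$ and $\gamma.q_0.d+1\neq\gamma.p.d$ where $q_0=\gamma.p.par$; executing sets $p.par$ to the first $q$ in $N(p)$ with $\gamma.q.d+1=\gamma.p.d$. A node is enabled if one of its actions is enabled. A step $\gamma\to\gamma'$ (unfair daemon) holds iff there is a nonempty set $S$ of nodes enabled in $\gamma$ such that $\gamma'$ is obtained by every $p\in S$ simultaneously executing its enabled action (evaluated in $\gamma$), all other nodes unchanged. $\mathrm{Step}^{(d)}$ (d-steps): steps with $\gamma.r.d=\gamma'.r.d$ and $\gamma.p.d\ne\gamma'.p.d$ for some node $p$. $\mathrm{Step}^{(p)}$ (par-steps):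 steps with $\gamma.p.d=\gamma'.p.d$ for all $p$. A relation is well-founded if it admits no infinite forward chain. *)

theory Defs
  imports Main
begin

text \<open>Nodes form a finite type 'v (so V = UNIV).  N p is the ordered list of
neighbours of p.  A configuration assigns to each node a distance value and a parent.\<close>

record 'v cfg =
  dval :: "'v \<Rightarrow> nat"
  par  :: "'v \<Rightarrow> 'v"

definition graph_ok :: "('v::finite \<Rightarrow> 'v list) \<Rightarrow> bool" where
  "graph_ok N \<longleftrightarrow>
     (\<forall>p. distinct (N p)) \<and>
     (\<forall>p. p \<notin> set (N p)) \<and>
     (\<forall>p q. q \<in> set (N p) \<longleftrightarrow> p \<in> set (N q)) \<and>
     (\<forall>p q. (p, q) \<in> {(a, b). b \<in> set (N a)}\<^sup>*)"

definition valid_cfg :: "('v \<Rightarrow> 'v list) \<Rightarrow> 'v cfg \<Rightarrow> bool" where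
  "valid_cfg N \<gamma> \<longleftrightarrow> (\<forall>p. par \<gamma> p \<in> set (N p))"

definition Dist :: "('v \<Rightarrow> 'v list) \<Rightarrow> 'v cfg \<Rightarrow> 'v \<Rightarrow> nat" where
  "Dist N \<gamma> p = Min ((\<lambda>q. dval \<gamma> q + 1) ` set (N p))"

definition CD_en :: "('v \<Rightarrow> 'v list) \<Rightarrow> 'v \<Rightarrow> 'v cfg \<Rightarrow> 'v \<Rightarrow> bool" where
  "CD_en N r \<gamma> p \<longleftrightarrow> p \<noteq> r \<and> dval \<gamma> p \<noteq> Dist N \<gamma> p"

definition CP_en :: "('v \<Rightarrow> 'v list) \<Rightarrow> 'v \<Rightarrow> 'v cfg \<Rightarrow> 'v \<Rightarrow> bool" where
  "CP_en N r \<gamma> p \<longleftrightarrow> p \<noteq> r \<and> dval \<gamma> p = Dist N \<gamma> p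
      \<and> dval \<gamma> (par \<gamma> p) + 1 \<noteq> dval \<gamma> p"

definition enabled :: "('v \<Rightarrow> 'v list) \<Rightarrow> 'v \<Rightarrow> 'v cfg \<Rightarrow> 'v \<Rightarrow> bool" where
  "enabled N r \<gamma> p \<longleftrightarrow> (p = r \<and> dval \<gamma> r \<noteq> 0) \<or> CD_en N r \<gamma> p \<or> CP_en N r \<gamma> p"

definition new_d :: "('v \<Rightarrow> 'v list) \<Rightarrow> 'v \<Rightarrow> 'v cfg \<Rightarrow> 'v \<Rightarrow> nat" where
  "new_d N r \<gamma> p = (if p = r then 0 else if CD_en N r \<gamma> p then Dist N \<gamma> p else dval \<gamma> p)"

definition new_par :: "('v \<Rightarrow> 'v list) \<Rightarrow> 'v \<Rightarrow> 'v cfg \<Rightarrow> 'v \<Rightarrow> 'v" where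
  "new_par N r \<gamma> p = (if CP_en N r \<gamma> p
      then hd (filter (\<lambda>q. dval \<gamma> q + 1 = dval \<gamma> p) (N p)) else par \<gamma> p)"

definition bfs_step :: "('v \<Rightarrow> 'v list) \<Rightarrow> 'v \<Rightarrow> 'v cfg \<Rightarrow> 'v cfg \<Rightarrow> bool" where
  "bfs_step N r \<gamma> \<gamma>' \<longleftrightarrow> (\<exists>S. S \<noteq> {} \<and> (\<forall>p\<in>S. enabled N r \<gamma> p) \<and>
      \<gamma>' = \<lparr>dval = (\<lambda>p. if p \<in> S then new_d N r \<gamma> p else dval \<gamma> p),
            par = (\<lambda>p. if p \<in> S then new_par N r \<gamma> p else par \<gamma> p)\<rparr>)"

definition d_step :: "('v \<Rightarrow> 'v list) \<Rightarrow> 'v \<Rightarrow> 'v cfg \<Rightarrow> 'v cfg \<Rightarrow> bool" where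
  "d_step N r \<gamma> \<gamma>' \<longleftrightarrow> valid_cfg N \<gamma> \<and> bfs_step N r \<gamma> \<gamma>' \<and>
      dval \<gamma> r = dval \<gamma>' r \<and> (\<exists>p. dval \<gamma> p \<noteq> dval \<gamma>' p)"

definition par_step :: "('v \<Rightarrow> 'v list) \<Rightarrow> 'v \<Rightarrow> 'v cfg \<Rightarrow> 'v cfg \<Rightarrow> bool" where
  "par_step N r \<gamma> \<gamma>' \<longleftrightarrow> valid_cfg N \<gamma> \<and> bfs_step N r \<gamma> \<gamma>' \<and>
      (\<forall>p. dval \<gamma> p = dval \<gamma>' p)"

end

theory Submission
  imports Defs
begin

lemma finite_uniform:
  assumes "finite I" "\<forall>i\<in>I. \<exists>T::nat. \<forall>t\<ge>T. P i t"
  shows "\<exists>T. \<forall>i\<in>I. \<forall>t\<ge>T. P i t"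
  using assms
proof (induction I rule: finite_induct)
  case empty
  then show ?case by auto
next
  case (insert x F)
  then obtain T1 where T1: "\<forall>i\<in>F. \<forall>t\<ge>T1. P i t" by auto
  from insert obtain T2 where T2: "\<forall>t\<ge>T2. P x t" by auto
  show ?case
    by (rule exI[of _ "max T1 T2"]) (use T1 T2 in auto)
qed

lemma nbr_nonempty:
  assumes "graph_ok N" "p \<noteq> r"
  shows "N p \<noteq> []"
proof -
  have "(p, r) \<in> {(a, b). b \<in> set (N a)}\<^sup>*" using assms(1) unfolding graph_ok_def by blast
  then show ?thesis
    by (rule converse_rtranclE) (use assms(2) in auto)
qed

lemma height:
  assumes "graph_ok N"
  shows "\<exists>h. h r = (0::nat) \<and> (\<forall>p. p \<noteq> r \<longrightarrow> (\<exists>q\<in>set (N p). h q + 1 \<le> h p))"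
proof -
  let ?E = "{(a,b). b \<in> set (N a)}"
  have reach: "\<And>p. \<exists>k. (r,p) \<in> ?E^^k" using assms rtrancl_power unfolding graph_ok_def by blast
  have sym: "\<And>p q. q \<in> set (N p) \<longleftrightarrow> p \<in> set (N q)" using assms unfolding graph_ok_def by blast
  define h where "h p = (LEAST k. (r,p) \<in> ?E^^k)" for p
  have hr: "h r = 0" unfolding h_def by (rule Least_eq_0) simp
  have "\<exists>q\<in>set (N p). h q + 1 \<le> h p" if "p \<noteq> r" for p
  proof -
    have hp: "(r,p) \<in> ?E^^(h p)" unfolding h_def by (rule LeastI_ex) (rule reach)
    have "h p \<noteq> 0"
    proof
      assume "h p = 0"
      with hp that show False by simp
    qed
    then obtain k where k: "h p = Suc k" using not0_implies_Suc by blast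
    with hp obtain q where q1: "(r,q) \<in> ?E^^k" and q2: "(q,p) \<in> ?E"
      by auto
    have "h q \<le> k" unfolding h_def by (rule Least_le) (rule q1)
    moreover have "q \<in> set (N p)" using q2 sym by auto
    ultimately show ?thesis using k by force
  qed
  with hr show ?thesis by blast
qed

lemma Dist_le:
  "q \<in> set (N p) \<Longrightarrow> Dist N \<gamma> p \<le> dval \<gamma> q + 1"
  unfolding Dist_def by (rule Min_le) auto

lemma Dist_in:
  "N p \<noteq> [] \<Longrightarrow> \<exists>q\<in>set (N p). Dist N \<gamma> p = dval \<gamma> q + 1"
proof -
  assume "N p \<noteq> []"
  then have "Dist N \<gamma> p \<in> (\<lambda>q. dval \<gamma> q + 1) ` set (N p)"
    unfolding Dist_def by (intro Min_in) auto
  then show ?thesis by auto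
qed

lemma Dist_gt:
  "N p \<noteq> [] \<Longrightarrow> \<forall>q\<in>set (N p). v < dval \<gamma> q + 1 \<Longrightarrow> v < Dist N \<gamma> p"
  using Dist_in by metis

lemma Dist_cong: "dval \<gamma> = dval \<gamma>' \<Longrightarrow> Dist N \<gamma> p = Dist N \<gamma>' p"
  unfolding Dist_def by simp

lemma step_d:
  assumes "d_step N r \<gamma> \<gamma>' \<or> par_step N r \<gamma> \<gamma>'"
  shows "dval \<gamma>' r = dval \<gamma> r \<and>
     (\<forall>p. dval \<gamma>' p = dval \<gamma> p \<or> (p \<noteq> r \<and> dval \<gamma>' p = Dist N \<gamma> p))"
proof -
  have rr: "dval \<gamma>' r = dval \<gamma> r" using assms unfolding d_step_def par_step_def by auto
  from assms obtain S where S: "\<gamma>' = \<lparr>dval = (\<lambda>p. if p \<in> S then new_d N r \<gamma> p else dval \<gamma> p),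
            par = (\<lambda>p. if p \<in> S then new_par N r \<gamma> p else par \<gamma> p)\<rparr>"
    unfolding d_step_def par_step_def bfs_step_def by blast
  have "dval \<gamma>' p = dval \<gamma> p \<or> (p \<noteq> r \<and> dval \<gamma>' p = Dist N \<gamma> p)" for p
  proof (cases "p = r")
    case True then show ?thesis using rr by simp
  next
    case False then show ?thesis using S by (auto simp: new_d_def)
  qed
  with rr show ?thesis by blast
qed

lemma par_decr:
  assumes g: "graph_ok N" and ps: "par_step N r \<gamma> \<gamma>'"
  shows "{p. CP_en N r \<gamma>' p} \<subset> {p. CP_en N r \<gamma> p}"
proof -
  from ps have deq: "dval \<gamma>' = dval \<gamma>" unfolding par_step_def by auto
  from ps obtain S where Sne: "S \<noteq> {}" and en: "\<forall>p\<in>S. enabled N r \<gamma> p" and S: "\<gamma>' = \<lparr>dval = (\<lambda>p. if p \<in> S then new_d N r \<gamma> p else dval \<gamma> p),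
            par = (\<lambda>p. if p \<in> S then new_par N r \<gamma> p else par \<gamma> p)\<rparr>"
    unfolding par_step_def bfs_step_def by blast
  have DE: "Dist N \<gamma>' p = Dist N \<gamma> p" for p using Dist_cong[OF deq] .
  have cp: "CP_en N r \<gamma> p \<and> \<not> CP_en N r \<gamma>' p" if pS: "p \<in> S" for p
  proof -
    have "dval \<gamma>' p = new_d N r \<gamma> p" using S pS by simp
    then have nd: "new_d N r \<gamma> p = dval \<gamma> p" using deq by simp
    have c1: "CP_en N r \<gamma> p"
      using en pS nd unfolding enabled_def new_d_def CD_en_def by (auto split: if_splits)
    then have pr: "p \<noteq> r" and dp: "dval \<gamma> p = Dist N \<gamma> p" unfolding CP_en_def by auto
    obtain q where q: "q \<in> set (N p)" "Dist N \<gamma> p = dval \<gamma> q + 1"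
      using Dist_in[of N p \<gamma>, OF nbr_nonempty[OF g pr]] by blast
    let ?l = "filter (\<lambda>q. dval \<gamma> q + 1 = dval \<gamma> p) (N p)"
    have "?l \<noteq> []" using q dp by (auto simp: filter_empty_conv)
    then have "hd ?l \<in> set ?l" by (rule hd_in_set)
    then have "dval \<gamma> (hd ?l) + 1 = dval \<gamma> p" by simp
    moreover have "par \<gamma>' p = hd ?l" using S pS c1 by (simp add: new_par_def)
    ultimately have "\<not> CP_en N r \<gamma>' p" using deq unfolding CP_en_def by simp
    with c1 show ?thesis by blast
  qed
  have same: "CP_en N r \<gamma>' p = CP_en N r \<gamma> p" if "p \<notin> S" for p
  proof -
    have "par \<gamma>' p = par \<gamma> p" using S that by simp
    then show ?thesis using deq DE unfolding CP_en_def by simp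
  qed
  show ?thesis
  proof
    show "{p. CP_en N r \<gamma>' p} \<subseteq> {p. CP_en N r \<gamma> p}"
      using cp same by blast
    from Sne obtain p where "p \<in> S" by blast
    then show "{p. CP_en N r \<gamma>' p} \<noteq> {p. CP_en N r \<gamma> p}" using cp by blast
  qed
qed

lemma no_inf_par:
  fixes g :: "nat \<Rightarrow> ('v::finite) cfg"
  assumes "graph_ok N" "\<forall>t. par_step N r (g t) (g (Suc t))"
  shows False
proof -
  define f where "f t = card {p. CP_en N r (g t) p}" for t
  have lt: "f (Suc t) < f t" for t
    unfolding f_def by (rule psubset_card_mono) (simp, rule par_decr[OF assms(1) assms(2)[rule_format]])
  have "f t + t \<le> f 0" for t
  proof (induction t)
    case 0 show ?case by simp
  next
    case (Suc t) with lt[of t] show ?case by linarith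
  qed
  from this[of "Suc (f 0)"] show False by simp
qed

theorem lemma2:
  fixes N :: "'v::finite \<Rightarrow> 'v list" and r :: 'v
  assumes "graph_ok N"
  shows "\<not> (\<exists>\<gamma> :: nat \<Rightarrow> 'v cfg. \<forall>i. d_step N r (\<gamma> i) (\<gamma> (Suc i)) \<or> par_step N r (\<gamma> i) (\<gamma> (Suc i)))"
proof
  assume "\<exists>\<gamma> :: nat \<Rightarrow> 'v cfg. \<forall>i. d_step N r (\<gamma> i) (\<gamma> (Suc i)) \<or> par_step N r (\<gamma> i) (\<gamma> (Suc i))"
  then obtain \<gamma> :: "nat \<Rightarrow> 'v cfg" where st: "\<And>i. d_step N r (\<gamma> i) (\<gamma> (Suc i)) \<or> par_step N r (\<gamma> i) (\<gamma> (Suc i))"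
    by blast
  define d where "d t = dval (\<gamma> t)" for t
  have chg: "d (Suc t) p = d t p \<or> (p \<noteq> r \<and> d (Suc t) p = Dist N (\<gamma> t) p)" for t p
    using step_d[OF st[of t]] unfolding d_def by blast
  have rootc: "d (Suc t) r = d t r" for t
    using step_d[OF st[of t]] unfolding d_def by blast
  have Dle: "q \<in> set (N p) \<Longrightarrow> Dist N (\<gamma> t) p \<le> d t q + 1" for q p t
    unfolding d_def by (rule Dist_le)
  have Dgt: "N p \<noteq> [] \<Longrightarrow> \<forall>q\<in>set (N p). v < d t q + 1 \<Longrightarrow> v < Dist N (\<gamma> t) p" for p v t
    unfolding d_def by (rule Dist_gt)
  obtain h where h0: "h r = (0::nat)" and hs: "\<And>p. p \<noteq> r \<Longrightarrow> \<exists>q\<in>set (N p). h q + 1 \<le> h p"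
    using height[OF assms] by blast
  define K where "K = max (d 0 r) (Max (range (d 0)))"
  have bnd: "d t p \<le> K + h p" for t p
  proof (induction t arbitrary: p)
    case 0
    have "d 0 p \<le> Max (range (d 0))" by (rule Max_ge) auto
    then show ?case unfolding K_def by linarith
  next
    case (Suc t)
    show ?case
    proof (cases "d (Suc t) p = d t p")
      case True then show ?thesis using Suc.IH by simp
    next
      case False
      with chg[of t p] have pr: "p \<noteq> r" and eq: "d (Suc t) p = Dist N (\<gamma> t) p" by auto
      obtain q where q: "q \<in> set (N p)" "h q + 1 \<le> h p" using hs[OF pr] by blast
      have "d (Suc t) p \<le> d t q + 1" using eq Dle[OF q(1)] by simp
      also have "\<dots> \<le> K + h q + 1" using Suc.IH[of q] by simp
      finally show ?thesis using q(2) by simp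
    qed
  qed
  define Bd where "Bd = K + Max (range h)"
  have bd: "d t p \<le> Bd" for t p
  proof -
    have "h p \<le> Max (range h)" by (rule Max_ge) auto
    then show ?thesis using bnd[of t p] unfolding Bd_def by linarith
  qed
  define C where "C = {p. \<forall>T. \<exists>t\<ge>T. d (Suc t) p \<noteq> d t p}"
  have "\<exists>T0. \<forall>p\<in>UNIV. \<forall>t\<ge>T0. p \<notin> C \<longrightarrow> d (Suc t) p = d t p"
  proof (rule finite_uniform)
    show "\<forall>p\<in>UNIV. \<exists>T0. \<forall>t\<ge>T0. p \<notin> C \<longrightarrow> d (Suc t) p = d t p"
    proof
      fix p :: 'v
      show "\<exists>T0. \<forall>t\<ge>T0. p \<notin> C \<longrightarrow> d (Suc t) p = d t p"
      proof (cases "p \<in> C")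
        case True then show ?thesis by blast
      next
        case False then show ?thesis unfolding C_def by auto
      qed
    qed
  qed simp
  then obtain T0 where T0: "\<And>p t. t \<ge> T0 \<Longrightarrow> p \<notin> C \<Longrightarrow> d (Suc t) p = d t p" by blast
  have const: "d t p = d T0 p" if "t \<ge> T0" "p \<notin> C" for t p
    using that(1)
  proof (induction t rule: dec_induct)
    case base then show ?case by simp
  next
    case (step t) then show ?case using T0[OF step(1) that(2)] by simp
  qed
  have "C \<noteq> {}"
  proof
    assume Ce: "C = {}"
    have "par_step N r (\<gamma> (T0 + t)) (\<gamma> (Suc (T0 + t)))" for t
    proof -
      have "\<forall>p. d (Suc (T0 + t)) p = d (T0 + t) p" using T0[of "T0 + t"] Ce by simp
      then have "\<not> d_step N r (\<gamma> (T0 + t)) (\<gamma> (Suc (T0 + t)))"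
        unfolding d_step_def d_def by auto
      then show ?thesis using st[of "T0 + t"] by blast
    qed
    then show False using no_inf_par[OF assms, of r "\<lambda>t. \<gamma> (T0 + t)"] by simp
  qed
  then obtain p0 where p0: "p0 \<in> C" by blast
  define A where "A = {v. \<exists>q\<in>C. \<forall>T. \<exists>t\<ge>T. d t q = v}"
  have Afin: "finite A"
  proof (rule finite_subset[of _ "{..Bd}"])
    show "A \<subseteq> {..Bd}"
    proof
      fix v assume "v \<in> A"
      then obtain q t where "d t q = v" unfolding A_def by blast
      then show "v \<in> {..Bd}" using bd[of t q] by simp
    qed
  qed simp
  have "\<exists>v. \<forall>T. \<exists>t\<ge>T. d t p0 = v"
  proof (rule ccontr)
    assume "\<nexists>v. \<forall>T. \<exists>t\<ge>T. d t p0 = v"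
    then have "\<forall>v\<in>{..Bd}. \<exists>T. \<forall>t\<ge>T. d t p0 \<noteq> v" by auto
    then obtain T where "\<forall>v\<in>{..Bd}. \<forall>t\<ge>T. d t p0 \<noteq> v"
      using finite_uniform[of "{..Bd}" "\<lambda>v t. d t p0 \<noteq> v"] by blast
    then show False using bd[of T p0] by auto
  qed
  then have Ane: "A \<noteq> {}" unfolding A_def using p0 by blast
  define vs where "vs = Min A"
  have "vs \<in> A" unfolding vs_def using Afin Ane by (rule Min_in)
  then obtain p where pC: "p \<in> C" and inf: "\<And>T. \<exists>t\<ge>T. d t p = vs" unfolding A_def by blast
  have low: "\<exists>T. \<forall>t\<ge>T. d t q \<noteq> v" if "q \<in> C" "v < vs" for q v
  proof (rule ccontr)
    assume "\<nexists>T. \<forall>t\<ge>T. d t q \<noteq> v"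
    then have "v \<in> A" unfolding A_def using that(1) by blast
    then have "vs \<le> v" unfolding vs_def using Afin by simp
    with that(2) show False by simp
  qed
  have "\<forall>q\<in>C. \<exists>T. \<forall>t\<ge>T. vs \<le> d t q"
  proof
    fix q assume qC: "q \<in> C"
    have "\<exists>T. \<forall>v\<in>{..<vs}. \<forall>t\<ge>T. d t q \<noteq> v"
      by (rule finite_uniform) (use low qC in auto)
    then obtain T where T: "\<forall>v\<in>{..<vs}. \<forall>t\<ge>T. d t q \<noteq> v" by blast
    have "\<forall>t\<ge>T. vs \<le> d t q"
    proof (intro allI impI)
      fix t assume "t \<ge> T"
      then show "vs \<le> d t q" using T by (metis lessThan_iff not_le)
    qed
    then show "\<exists>T. \<forall>t\<ge>T. vs \<le> d t q" by blast
  qed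
  then obtain T1 where T1: "\<And>q t. q \<in> C \<Longrightarrow> t \<ge> T1 \<Longrightarrow> vs \<le> d t q"
    using finite_uniform[of C "\<lambda>q t. vs \<le> d t q"] finite[of C] by blast
  define T where "T = max T0 T1"
  have pr: "p \<noteq> r"
  proof
    assume "p = r"
    with pC obtain t where "d (Suc t) r \<noteq> d t r" unfolding C_def by blast
    with rootc show False by simp
  qed
  have Np: "N p \<noteq> []" using nbr_nonempty[OF assms pr] .
  obtain s1 where s1: "s1 \<ge> T" "d (Suc s1) p \<noteq> d s1 p" using pC unfolding C_def by blast
  show False
  proof (cases "\<exists>q\<in>set (N p). q \<notin> C \<and> d T0 q + 1 \<le> vs")
    case True
    then obtain q where q: "q \<in> set (N p)" "q \<notin> C" "d T0 q + 1 \<le> vs" by blast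
    have toV: "d (Suc s) p = vs" if "s \<ge> T" "d (Suc s) p \<noteq> d s p" for s
    proof -
      have "d (Suc s) p = Dist N (\<gamma> s) p" using chg[of s p] that(2) by auto
      also have "\<dots> \<le> d s q + 1" using Dle[OF q(1)] .
      also have "d s q = d T0 q" using const[of s q] q(2) that(1) unfolding T_def by simp
      finally have "d (Suc s) p \<le> vs" using q(3) by simp
      moreover have "vs \<le> d (Suc s) p" using T1[OF pC] that(1) unfolding T_def by simp
      ultimately show ?thesis by simp
    qed
    have allv: "d t p = vs" if "t \<ge> Suc s1" for t
      using that
    proof (induction t rule: dec_induct)
      case base then show ?case using toV s1 by simp
    next
      case (step t)
      then show ?case using toV[of t] s1(1) by fastforce
    qed
    obtain s2 where s2: "s2 \<ge> Suc s1" "d (Suc s2) p \<noteq> d s2 p" using pC unfolding C_def by blast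
    then show False using allv[of s2] allv[of "Suc s2"] by simp
  next
    case False
    have gt: "vs < Dist N (\<gamma> s) p" if "s \<ge> T" for s
    proof (rule Dgt[OF Np], rule ballI)
      fix q assume q: "q \<in> set (N p)"
      show "vs < d s q + 1"
      proof (cases "q \<in> C")
        case True then show ?thesis using T1[of q s] that unfolding T_def by simp
      next
        case qn: False
        then have "vs < d T0 q + 1" using False q by auto
        then show ?thesis using const[of s q] qn that unfolding T_def by simp
      qed
    qed
    have nov: "d t p \<noteq> vs" if "t \<ge> Suc s1" for t
      using that
    proof (induction t rule: dec_induct)
      case base
      have "d (Suc s1) p = Dist N (\<gamma> s1) p" using chg[of s1 p] s1(2) by auto
      then show ?case using gt[OF s1(1)] by simp
    next
      case (step t)
      have tT: "t \<ge> T" using step(1) s1(1) by simp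
      show ?case
      proof (cases "d (Suc t) p = d t p")
        case True then show ?thesis using step(3) by simp
      next
        case False
        then have "d (Suc t) p = Dist N (\<gamma> t) p" using chg[of t p] by auto
        then show ?thesis using gt[OF tT] by simp
      qed
    qed
    obtain t where "t \<ge> Suc s1" "d t p = vs" using inf by blast
    then show False using nov by blast
  qed
qed

end
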